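(* Let $W$ be a channel over the alphabet $\mathcal{X}$. If $W$ admits a decision chain of length $r\ge 3$, then there is no metric on $\mathcal{X}$ matched to $W$.
   Context: A channel $W:\mathcal{X}\to\mathcal{X}$ is given by a conditional probability distribution $\Pr:\mathcal{X}\times\mathcal{X}\to\mathbb{R}$, where $\Pr(x\mid y)=\Pr(x\text{ received}\mid y\text{ sent})\ge 0$ and $\sum_{x}\Pr(x\mid y)=1$ for every $y$. All codewords are assumed equally likely. A channel $W$ and a metric $d$ on $\mathcal{X}$ are matched if for every (nonempty) code $C\subseteq\mathcal{X}$ and every $x\in\mathcal{X}$, $\operatorname{argmax}_{y\in C}\Pr(x\mid y)=\operatorname{argmin}_{y\in C}d(x,y)$ (equality of sets). For $x\in\mathcal{X}$ and $0\le t\le 1$, the $t$-decision region centered at $x$ is $B^t(x)=\{y\in\mathcal{X}:\Pr(x\mid y)\ge t\}$. Elements $x_0,x_1,\dots,x_{r-1}\in\mathcal{X}$ form a decision chain of length $r$ on $W$ if there are real numbers $t_0,\dots,t_{r-1}>0$ such that for every $i$ (indices taken modulo $r$): $x_{i+1}\in B^{t_i}(x_i)$ (forward inclusion) and $x_i\notin B^{t_{i+1}}(x_{i+1})$ (backward exclusion). *)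

theory Defs
  imports Complex_Main
begin

text \<open>A channel over a finite alphabet 'a: W x y = Pr(x received | y sent).\<close>
definition channel :: "('a::finite \<Rightarrow> 'a \<Rightarrow> real) \<Rightarrow> bool" where
  "channel W \<longleftrightarrow> (\<forall>x y. W x y \<ge> 0) \<and> (\<forall>y. (\<Sum>x\<in>UNIV. W x y) = 1)"

definition is_metric :: "('a \<Rightarrow> 'a \<Rightarrow> real) \<Rightarrow> bool" where
  "is_metric d \<longleftrightarrow> (\<forall>x y. d x y \<ge> 0) \<and> (\<forall>x y. d x y = 0 \<longleftrightarrow> x = y)
     \<and> (\<forall>x y. d x y = d y x) \<and> (\<forall>x y z. d x z \<le> d x y + d y z)"

definition argmax_on :: "('a \<Rightarrow> real) \<Rightarrow> 'a set \<Rightarrow> 'a set" where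
  "argmax_on f C = {y \<in> C. \<forall>z\<in>C. f z \<le> f y}"

definition argmin_on :: "('a \<Rightarrow> real) \<Rightarrow> 'a set \<Rightarrow> 'a set" where
  "argmin_on f C = {y \<in> C. \<forall>z\<in>C. f y \<le> f z}"

definition matched :: "('a \<Rightarrow> 'a \<Rightarrow> real) \<Rightarrow> ('a \<Rightarrow> 'a \<Rightarrow> real) \<Rightarrow> bool" where
  "matched W d \<longleftrightarrow> (\<forall>C x. C \<noteq> {} \<longrightarrow> argmax_on (\<lambda>y. W x y) C = argmin_on (\<lambda>y. d x y) C)"

definition decision_region :: "('a \<Rightarrow> 'a \<Rightarrow> real) \<Rightarrow> real \<Rightarrow> 'a \<Rightarrow> 'a set" where
  "decision_region W t x = {y. W x y \<ge> t}"

definition decision_chain :: "('a \<Rightarrow> 'a \<Rightarrow> real) \<Rightarrow> nat \<Rightarrow> (nat \<Rightarrow> 'a) \<Rightarrow> bool" where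
  "decision_chain W r xs \<longleftrightarrow> (\<exists>t :: nat \<Rightarrow> real.
      (\<forall>i<r. 0 < t i \<and> t i \<le> 1) \<and>
      (\<forall>i<r. xs ((i+1) mod r) \<in> decision_region W (t i) (xs i)) \<and>
      (\<forall>i<r. xs i \<notin> decision_region W (t ((i+1) mod r)) (xs ((i+1) mod r))))"

end

theory Submission
  imports Defs
begin

theorem mainTheorem3:
  fixes W :: "'a::finite \<Rightarrow> 'a \<Rightarrow> real" and r :: nat and xs :: "nat \<Rightarrow> 'a"
  assumes "channel W"
    and "r \<ge> 3"
    and "decision_chain W r xs"
  shows "\<not> (\<exists>d. is_metric d \<and> matched W d)"
proof
  assume "\<exists>d. is_metric d \<and> matched W d"
  then obtain d where dm: "is_metric d" and mt: "matched W d" by blast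
  obtain t where tp: "\<forall>i<r. 0 < t i \<and> t i \<le> 1"
    and fw: "\<forall>i<r. xs ((i+1) mod r) \<in> decision_region W (t i) (xs i)"
    and bw: "\<forall>i<r. xs i \<notin> decision_region W (t ((i+1) mod r)) (xs ((i+1) mod r))"
    using assms(3) unfolding decision_chain_def by blast
  have r0: "r > 0" using assms(2) by simp
  define D where "D i = d (xs i) (xs ((i+1) mod r))" for i
  have step: "D ((i+1) mod r) < D i" if "i < r" for i
  proof -
    define j where "j = (i+1) mod r"
    have jr: "j < r" using r0 by (simp add: j_def)
    define a where "a = xs i"
    define b where "b = xs j"
    define c where "c = xs ((j+1) mod r)"
    have h1: "W b a < t j" using bw[rule_format, OF that] unfolding decision_region_def a_def b_def j_def by simp
    have h2: "W b c \<ge> t j" using fw[rule_format, OF jr] unfolding decision_region_def b_def c_def by simp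
    have lt: "W b a < W b c" using h1 h2 by simp
    have ne: "{a, c} \<noteq> {}" by simp
    have eq: "argmax_on (\<lambda>y. W b y) {a,c} = argmin_on (\<lambda>y. d b y) {a,c}"
      using mt ne unfolding matched_def by simp
    have "a \<notin> argmax_on (\<lambda>y. W b y) {a,c}" using lt unfolding argmax_on_def by auto
    hence "a \<notin> argmin_on (\<lambda>y. d b y) {a,c}" using eq by simp
    hence "d b c < d b a" unfolding argmin_on_def by auto
    moreover have "d b a = d a b" using dm unfolding is_metric_def by simp
    ultimately show ?thesis unfolding D_def a_def b_def c_def j_def by simp
  qed
  have ind: "D (k mod r) < D 0" if "1 \<le> k" "k \<le> r" for k
    using that
  proof (induction k)
    case 0 then show ?case by simp
  next
    case (Suc k)
    show ?case
    proof (cases "k = 0")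
      case True
      then show ?thesis using step[of 0] r0 by simp
    next
      case False
      have "D ((k mod r + 1) mod r) < D (k mod r)" using step r0 by simp
      moreover have "(k mod r + 1) mod r = Suc k mod r" by (simp add: mod_Suc_eq)
      ultimately show ?thesis using Suc False by simp
    qed
  qed
  have "D (r mod r) < D 0" using ind[of r] assms(2) by simp
  thus False by simp
qed

end
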